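(* Let $r$ be a positive integer and let $$h(X)=\sum_{0\le i<(q+1)/d,\ 0\le j<d}a_{ij}X^{i+j(q+1)/d}\in\mathbb F_{q^2}[X],\qquad M_{ik}=\sum_{j=0}^{d-1}a_{ij}\epsilon^{jk}\ \ (0\le i<(q+1)/d,\ 0\le k<d).$$ Then $X^rh(X^{q-1})$ is a permutation polynomial of $\mathbb F_{q^2}$ such that, for every $0\le k<d$, the function $x\mapsto x^rh(x)^{q-1}$ restricted to $A_k$ is of the form $x\mapsto c_kx^{n_k}$ for some $c_k\in\mathbb F_{q^2}$ and integer $n_k$, if and only if the following three conditions hold: (i) for each $0\le k<d$ there exist integers $s_k,t_k\ge0$ with $s_k+t_k<(q+1)/d$, an element $\pi(k)\in\mathbb Z/d\mathbb Z$, an element $\lambda_k\in A_{\pi(k)}$, and an integer $\tau_k\in\{0\}\cup[(q+1)/d-t_k,\,t_k]$, such that $\sum_iM_{ik}X^i=X^{s_k}L_k(X)$ with $L_k\in\mathcal L_k(t_k,\tau_k;\lambda_k)$; (ii) $\gcd(r,q-1)=1$ and $\gcd(e_k,(q+1)/d)=1$ for all $0\le k<d$, where $e_k=r-2s_k-t_k+\tau_k$; (iii) the map $k\mapsto\pi(k)+e_kk$ permutes $\mathbb Z/d\mathbb Z$.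
   Context: $q$ is a prime power, $d$ is a positive divisor of $q+1$, and $\epsilon\in\mathbb F_{q^2}^*$ has multiplicative order $d$. $\mu_m$ denotes the subgroup of order $m$ of $\mathbb F_{q^2}^*$. For $0\le k<d$ (indices read mod $d$), $A_k=\{x\in\mu_{q+1}: x^{(q+1)/d}=\epsilon^k\}$. For $a\in\mathbb F_{q^2}$, $\bar a=a^q$; for $f(X)=\sum_{i=0}^n a_iX^i\in\mathbb F_{q^2}[X]$ with $a_n\neq0$, $\tilde f(X)=\sum_{i=0}^n\bar a_iX^{n-i}$. For $0\le k<d$, $0\le t<(q+1)/d$ and $\lambda\in\mu_{q+1}$: $\mathcal L_k(t,0;\lambda)$ is the set of $L\in\mathbb F_{q^2}[X]$ with $\deg L=t$, $\tilde L=\lambda L$ and $\gcd(L,X^{(q+1)/d}-\epsilon^k)=1$; and for an integer $\tau$ with $(q+1)/d-t\le\tau\le t$, $\mathcal L_k(t,\tau;\lambda)$ is the set of polynomials $L=P+X^{(q+1)/d-\tau}Q$ with $P,Q\in\mathbb F_{q^2}[X]$, $\deg P=t-\tau$, $\tilde P=\lambda P$, $\deg Q=\tau+t-(q+1)/d$, $\tilde Q=\lambda\epsilon^kQ$, and $\gcd(L,X^{(q+1)/d}-\epsilon^k)=1$. *)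

theory Defs
  imports "HOL-Computational_Algebra.Computational_Algebra" "HOL-Library.Cardinality"
begin

definition is_prime_power :: "nat \<Rightarrow> bool" where
  "is_prime_power q \<longleftrightarrow> (\<exists>p k. prime p \<and> k > 0 \<and> q = p ^ k)"

definition has_mult_order :: "'a::field \<Rightarrow> nat \<Rightarrow> bool" where
  "has_mult_order e n \<longleftrightarrow> n > 0 \<and> e ^ n = 1 \<and> (\<forall>j. 0 < j \<and> j < n \<longrightarrow> e ^ j \<noteq> 1)"

definition mu :: "nat \<Rightarrow> 'a::field set" where
  "mu n = {x. x \<noteq> 0 \<and> x ^ n = 1}"

definition Aset :: "nat \<Rightarrow> nat \<Rightarrow> 'a::field \<Rightarrow> nat \<Rightarrow> 'a set" where
  "Aset q d eps k = {x \<in> mu (q + 1). x ^ ((q + 1) div d) = eps ^ k}"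

text \<open>Conjugation bar a = a^q and the conjugate-reciprocal f tilde.\<close>
definition ptilde :: "nat \<Rightarrow> 'a::field poly \<Rightarrow> 'a poly" where
  "ptilde q f = (\<Sum>i\<le>degree f. monom ((coeff f i) ^ q) (degree f - i))"

definition Lset :: "nat \<Rightarrow> nat \<Rightarrow> 'a::field_gcd \<Rightarrow> nat \<Rightarrow> nat \<Rightarrow> nat \<Rightarrow> 'a \<Rightarrow> 'a poly set" where
  "Lset q d eps k t \<tau> lam =
    (let m = (q + 1) div d; g = monom 1 m - [:eps ^ k:] in
     if \<tau> = 0 then
       {L. L \<noteq> 0 \<and> degree L = t \<and> ptilde q L = smult lam L \<and> gcd L g = 1}
     else
       {L. \<exists>P Q. L = P + monom 1 (m - \<tau>) * Q \<and>
             P \<noteq> 0 \<and> degree P = t - \<tau> \<and> ptilde q P = smult lam P \<and>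
             Q \<noteq> 0 \<and> degree Q = \<tau> + t - m \<and> ptilde q Q = smult (lam * eps ^ k) Q \<and>
             gcd L g = 1})"

definition permutation_poly :: "'a::field poly \<Rightarrow> bool" where
  "permutation_poly f \<longleftrightarrow> bij (poly f)"

end

theory Submission
  imports Defs
begin

lemma of_nat_card_finite_ring: "of_nat CARD('a::{finite,comm_ring_1}) = (0::'a)"
proof -
  have "(\<Sum>x\<in>(UNIV::'a set). x) = (\<Sum>x\<in>UNIV. x + 1)"
    by (rule sum.reindex_bij_witness[of _ "\<lambda>y. y + 1" "\<lambda>y. y - 1"]) auto
  also have "\<dots> = (\<Sum>x\<in>UNIV. x) + of_nat CARD('a)" by (simp add: sum.distrib)
  finally show ?thesis by (metis add_cancel_right_right)
qed

lemma CHAR_dvd_CARD': "CHAR('a::{finite,comm_ring_1}) dvd CARD('a)"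
  using of_nat_card_finite_ring[where 'a='a] of_nat_eq_0_iff_char_dvd by blast

locale ffq =
  fixes q :: nat and ty :: "'a::{finite,field_gcd} itself"
  assumes ppow: "is_prime_power q" and cardF: "CARD('a) = q^2"
begin

lemma q_ge2: "q \<ge> 2"
proof -
  obtain p k where pk: "prime p" "k > 0" "q = p ^ k" using ppow unfolding is_prime_power_def by blast
  have "p \<ge> 2" using pk(1) prime_ge_2_nat by blast
  have "p ^ 1 \<le> p ^ k" using pk(2) \<open>p \<ge> 2\<close> by (intro power_increasing) auto
  then show ?thesis using pk(3) \<open>p \<ge> 2\<close> by simp
qed

lemma frob_add: "((x::'a) + y) ^ q = x ^ q + y ^ q"
proof -
  obtain p k where pk: "prime p" "k > 0" "q = p ^ k" using ppow unfolding is_prime_power_def by blast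
  have fin: "finite (UNIV :: 'a set)" by simp
  have pc: "prime CHAR('a)"
    by (rule prime_CHAR_semidom) (use finite_imp_CHAR_pos[OF fin] in auto)
  have "CHAR('a) dvd CARD('a)" by (rule CHAR_dvd_CARD')
  then have "CHAR('a) dvd (p ^ k)^2" using cardF pk(3) by simp
  then have "CHAR('a) dvd p ^ k" using pc prime_dvd_power_nat by blast
  then have "CHAR('a) dvd p" using pc prime_dvd_power_nat by blast
  then have "CHAR('a) = p" using pc pk(1) primes_dvd_imp_eq by blast
  then have "q = CHAR('a) ^ k" using pk(3) by simp
  from freshmans_dream'[OF pc this] show ?thesis .
qed

lemma frob_sum: "(sum (f :: _ \<Rightarrow> 'a) A) ^ q = (\<Sum>i\<in>A. f i ^ q)"
proof (induction A rule: infinite_finite_induct)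
  case (infinite A) then show ?case using q_ge2 by simp
next
  case empty then show ?case using q_ge2 by simp
next
  case (insert x F) then show ?case by (simp add: frob_add)
qed
lemma pow_card: "(x::'a) ^ (q^2) = x"
proof (cases "x = 0")
  case False
  have "x * (\<Prod>y\<in>UNIV-{0}. x * y) = x * x ^ (card (UNIV :: 'a set) - 1) * \<Prod>(UNIV-{0})"
    by (simp add: prod.distrib mult_ac)
  also have "x * x ^ (card (UNIV :: 'a set) - 1) = x ^ Suc (card (UNIV :: 'a set) - 1)"
    by (subst power_Suc) auto
  also have "Suc (card (UNIV :: 'a set) - 1) = card (UNIV :: 'a set)"
    using finite_UNIV_card_ge_0[where ?'a = 'a] by simp
  also have "(\<Prod>y\<in>UNIV-{0}. x * y) = (\<Prod>y\<in>UNIV-{0}. y)"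
    by (rule prod.reindex_bij_witness[of _ "\<lambda>y. y / x" "\<lambda>y. x * y"]) (use False in auto)
  finally show ?thesis using cardF by simp
qed (use q_ge2 in auto)

lemma unit_pow: "(x::'a) \<noteq> 0 \<Longrightarrow> x ^ (q^2 - 1) = 1"
proof -
  assume "x \<noteq> 0"
  have "x * x ^ (q^2 - 1) = x ^ Suc (q^2 - 1)" by simp
  also have "Suc (q^2 - 1) = q^2" using q_ge2 by (simp add: Suc_diff_1)
  finally have "x * x ^ (q^2 - 1) = x * 1" using pow_card by simp
  then show ?thesis using \<open>x \<noteq> 0\<close> by (metis mult_left_cancel)
qed

lemma card_roots_le: "n > 0 \<Longrightarrow> card {x::'a. x ^ n = c} \<le> n"
proof -
  assume n: "n > 0"
  define P where "P = monom (1::'a) n - [:c:]"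
  have deg: "degree P \<le> n" unfolding P_def by (intro degree_diff_le) (auto simp: degree_monom_eq)
  have "coeff P n = 1" using n unfolding P_def by (simp add: coeff_pCons split: nat.split)
  then have "P \<noteq> 0" by auto
  have "{x::'a. x ^ n = c} = {x. poly P x = 0}" by (auto simp: P_def poly_monom)
  then show ?thesis using card_poly_roots_bound[OF \<open>P \<noteq> 0\<close>] deg by simp
qed

lemma card_roots: assumes "n dvd q^2 - 1" shows "card {x::'a. x ^ n = 1} = n"
proof -
  define N where "N = q^2 - 1"
  have "q^2 \<ge> 2^2" using q_ge2 power_mono[of 2 q 2] by simp
  then have N0: "N > 0" unfolding N_def by simp
  obtain k where k: "N = n * k" using assms N_def by blast
  have n0: "n > 0" "k > 0" using k N0 by auto
  define H where "H = (\<Sum>i<k. monom (1::'a) (n*i))"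
  have cH: "coeff H 0 = 1" using n0 unfolding H_def by (simp add: coeff_sum coeff_monom)
  then have H0: "H \<noteq> 0" by auto
  have dH: "degree H \<le> N - n"
    unfolding H_def
  proof (rule degree_sum_le)
    fix i assume "i \<in> {..<k}"
    then have "i \<le> k - 1" by simp
    then have "n * i \<le> n * (k - 1)" by (rule mult_le_mono2)
    also have "n * (k - 1) = N - n" using k by (simp add: diff_mult_distrib2)
    finally have "n * i \<le> N - n" .
    then show "degree (monom (1::'a) (n*i)) \<le> N - n" by (simp add: degree_monom_eq)
  qed simp
  have sub: "UNIV - {0::'a} \<subseteq> {x. x ^ n = 1} \<union> {x. poly H x = 0}"
  proof
    fix x :: 'a assume "x \<in> UNIV - {0}"
    then have "x ^ N = 1" using unit_pow N_def by simp
    then have "(x ^ n) ^ k - 1 = 0" using k by (simp add: power_mult)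
    then have "(x ^ n - 1) * (\<Sum>i<k. (x^n)^i) = 0" by (simp add: power_diff_1_eq)
    moreover have "poly H x = (\<Sum>i<k. (x^n)^i)"
      unfolding H_def by (simp add: poly_sum poly_monom power_mult)
    ultimately show "x \<in> {x. x ^ n = 1} \<union> {x. poly H x = 0}" by auto
  qed
  have "N = card (UNIV - {0::'a})" using cardF N_def by (simp add: card_Diff_singleton)
  also have "\<dots> \<le> card ({x. x ^ n = 1} \<union> {x::'a. poly H x = 0})" by (rule card_mono) (use sub in auto)
  also have "\<dots> \<le> card {x::'a. x ^ n = 1} + card {x::'a. poly H x = 0}" by (rule card_Un_le)
  also have "\<dots> \<le> card {x::'a. x ^ n = 1} + (N - n)"
    using card_poly_roots_bound[OF H0] dH by simp
  finally have "N \<le> card {x::'a. x ^ n = 1} + (N - n)" .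
  moreover have "n \<le> N" using k n0 by simp
  ultimately have "n \<le> card {x::'a. x ^ n = 1}" by arith
  moreover have "card {x::'a. x ^ n = 1} \<le> n" using card_roots_le n0 by simp
  ultimately show ?thesis by simp
qed

lemma exists_root_ne1: assumes "n dvd q^2 - 1" "n \<ge> 2" shows "\<exists>z::'a. z ^ n = 1 \<and> z \<noteq> 1"
proof (rule ccontr)
  assume "\<not> ?thesis"
  then have "{x::'a. x ^ n = 1} \<subseteq> {1}" by auto
  then have "card {x::'a. x ^ n = 1} \<le> card {1::'a}" by (intro card_mono) auto
  then show False using card_roots[OF assms(1)] assms(2) by simp
qed

end

lemma pow_gcd_1:
  fixes z :: "'b::comm_monoid_mult"
  shows "z ^ a = 1 \<Longrightarrow> z ^ b = 1 \<Longrightarrow> z ^ (gcd a b) = 1"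
proof (induction a b rule: gcd_nat_induct)
  case (base m) then show ?case by simp
next
  case (step m n)
  have "z ^ m = (z ^ n) ^ (m div n) * z ^ (m mod n)"
    by (metis div_mult_mod_eq power_add power_mult mult.commute)
  then have "z ^ (m mod n) = 1" using step.prems by simp
  then have "z ^ gcd n (m mod n) = 1" using step.IH step.prems by simp
  then show ?case by (metis gcd_red_nat)
qed

lemma pow_dvd_1: "(z::'b::monoid_mult) ^ a = 1 \<Longrightarrow> a dvd b \<Longrightarrow> z ^ b = 1"
  by (metis dvd_def power_mult power_one)

context ffq begin

lemma qq: "(q - 1) * (q + 1) = q^2 - 1"
  using q_ge2 by (cases q) (auto simp: power2_eq_square algebra_simps)

lemma q1_dvd: "q + 1 dvd q^2 - 1" "q - 1 dvd q^2 - 1"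
  using qq by (metis dvd_triv_right, metis dvd_triv_left)

lemma unit_pow_q1: "(x::'a) \<noteq> 0 \<Longrightarrow> (x ^ (q - 1)) ^ (q + 1) = 1"
proof -
  assume "x \<noteq> 0"
  have "(x ^ (q - 1)) ^ (q + 1) = x ^ ((q - 1) * (q + 1))" by (simp only: power_mult[symmetric])
  then show ?thesis using qq unit_pow[OF \<open>x \<noteq> 0\<close>] by simp
qed

lemma pow_q1_onto:
  assumes "(y::'a) ^ (q + 1) = 1" shows "\<exists>x. x \<noteq> 0 \<and> x ^ (q - 1) = y"
proof -
  define S where "S = UNIV - {0::'a}"
  define phi where "phi = (\<lambda>x::'a. x ^ (q - 1))"
  define U where "U = {y::'a. y ^ (q + 1) = 1}"
  have q1: "q - 1 > 0" using q_ge2 by simp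
  have finS: "finite S" by simp
  have imgU: "phi ` S \<subseteq> U" unfolding S_def phi_def U_def using unit_pow_q1 by auto
  have cardU: "card U = q + 1" unfolding U_def using card_roots[OF q1_dvd(1)] .
  have fib: "card {x\<in>S. phi x = y'} \<le> q - 1" if yS: "y' \<in> phi ` S" for y'
  proof -
    obtain x0 where x0: "x0 \<in> S" "phi x0 = y'" using yS by blast
    have "{x\<in>S. phi x = y'} \<subseteq> (\<lambda>z. x0 * z) ` {z. z ^ (q - 1) = 1}"
    proof
      fix x assume "x \<in> {x\<in>S. phi x = y'}"
      then have x: "x \<noteq> 0" "x ^ (q-1) = x0 ^ (q-1)" using x0 unfolding S_def phi_def by auto
      have "x0 \<noteq> 0" using x0 S_def by auto
      then have "(x / x0) ^ (q - 1) = 1" using x by (simp add: power_divide)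
      moreover have "x = x0 * (x / x0)" using \<open>x0 \<noteq> 0\<close> by simp
      ultimately show "x \<in> (\<lambda>z. x0 * z) ` {z. z ^ (q - 1) = 1}" by blast
    qed
    then have "card {x\<in>S. phi x = y'} \<le> card ((\<lambda>z. x0 * z) ` {z::'a. z ^ (q - 1) = 1})"
      by (intro card_mono) auto
    also have "\<dots> \<le> card {z::'a. z ^ (q - 1) = 1}" by (rule card_image_le) simp
    also have "\<dots> \<le> q - 1" using card_roots_le[OF q1] .
    finally show ?thesis .
  qed
  have "S = (\<Union>y'\<in>phi ` S. {x\<in>S. phi x = y'})" by auto
  then have "card S \<le> (\<Sum>y'\<in>phi ` S. card {x\<in>S. phi x = y'})"
    by (metis card_UN_le finS finite_imageI)
  also have "\<dots> \<le> (\<Sum>y'\<in>phi ` S. (q - 1))" by (intro sum_mono fib)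
  also have "\<dots> = card (phi ` S) * (q - 1)" by simp
  finally have "card S \<le> card (phi ` S) * (q - 1)" .
  moreover have "card S = (q + 1) * (q - 1)" unfolding S_def using cardF qq
    by (simp add: card_Diff_singleton mult.commute)
  ultimately have "(q + 1) * (q - 1) \<le> card (phi ` S) * (q - 1)" by simp
  then have "q + 1 \<le> card (phi ` S)" using q1 by (rule mult_right_le_imp_le)
  moreover have "card (phi ` S) \<le> card U" by (intro card_mono imgU) (simp add: U_def)
  ultimately have "phi ` S = U" using cardU imgU by (intro card_subset_eq) (auto simp: U_def)
  then have "y \<in> phi ` S" using assms U_def by auto
  then show ?thesis unfolding S_def phi_def by auto
qed

lemma pow_r_onto:
  assumes "coprime r (q - 1)" "(w::'a) ^ (q - 1) = 1"
  shows "\<exists>u. u ^ (q - 1) = 1 \<and> u ^ r = w"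
proof -
  define V where "V = {u::'a. u ^ (q - 1) = 1}"
  have "inj_on (\<lambda>u. u ^ r) V"
  proof (rule inj_onI)
    fix u v assume uv: "u \<in> V" "v \<in> V" "u ^ r = v ^ r"
    then have v0: "v \<noteq> 0" "u \<noteq> 0" using q_ge2 unfolding V_def by (auto simp: power_0_left)
    have "(u / v) ^ r = 1" "(u / v) ^ (q - 1) = 1" using uv v0 unfolding V_def by (auto simp: power_divide)
    then have "(u / v) ^ gcd r (q - 1) = 1" by (rule pow_gcd_1)
    then show "u = v" using assms(1) v0 by (simp add: coprime_iff_gcd_eq_1)
  qed
  moreover have "(\<lambda>u. u ^ r) ` V \<subseteq> V"
  proof
    fix y assume "y \<in> (\<lambda>u. u ^ r) ` V"
    then obtain u where "u \<in> V" "y = u ^ r" by blast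
    then have "y ^ (q - 1) = (u ^ (q - 1)) ^ r" by (simp only: power_mult[symmetric] mult.commute)
    then show "y \<in> V" using \<open>u \<in> V\<close> unfolding V_def by simp
  qed
  ultimately have "(\<lambda>u. u ^ r) ` V = V" by (intro endo_inj_surj) (auto simp: V_def)
  then show ?thesis using assms(2) unfolding V_def by (metis (mono_tags, lifting) image_iff mem_Collect_eq)
qed

lemma zieve:
  fixes H :: "'a \<Rightarrow> 'a" and r :: nat
  assumes r: "r > 0"
  shows "bij (\<lambda>x. x ^ r * H (x ^ (q - 1))) \<longleftrightarrow>
     (coprime r (q - 1) \<and> (\<forall>y. y ^ (q + 1) = 1 \<longrightarrow> H y \<noteq> 0) \<and>
      inj_on (\<lambda>y. y ^ r * H y ^ (q - 1)) {y. y ^ (q + 1) = 1})"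
    (is "bij ?f \<longleftrightarrow> ?R")
proof -
  define f where "f = ?f"
  define g where "g = (\<lambda>y::'a. y ^ r * H y ^ (q - 1))"
  have q1: "q - 1 > 0" using q_ge2 by simp
  have fg: "f x ^ (q - 1) = g (x ^ (q - 1))" for x
    unfolding f_def g_def by (simp add: power_mult_distrib power_mult[symmetric] mult.commute)
  have f0: "f 0 = 0" using r unfolding f_def by simp
  have fmul: "f (u * x) = u ^ r * f x" if "u ^ (q - 1) = 1" for u x
    using that unfolding f_def by (simp add: power_mult_distrib)
  show ?thesis unfolding f_def[symmetric] g_def[symmetric]
  proof
    assume "bij f"
    then have inj: "inj f" by (rule bij_is_inj)
    have Hne: "\<forall>y. y ^ (q + 1) = 1 \<longrightarrow> H y \<noteq> 0"
    proof (intro allI impI)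
      fix y :: 'a assume "y ^ (q + 1) = 1"
      then obtain x where x: "x \<noteq> 0" "x ^ (q - 1) = y" using pow_q1_onto by blast
      show "H y \<noteq> 0"
      proof
        assume "H y = 0"
        then have "f x = f 0" using f0 x unfolding f_def by simp
        then show False using inj x by (meson injD)
      qed
    qed
    have cop: "coprime r (q - 1)"
    proof (rule ccontr)
      assume nc: "\<not> coprime r (q - 1)"
      define l where "l = gcd r (q - 1)"
      have "l \<noteq> 1" using nc l_def by (simp add: coprime_iff_gcd_eq_1)
      moreover have "l > 0" using q1 l_def by simp
      ultimately have l2: "l \<ge> 2" by simp
      have "l dvd q^2 - 1" using q1_dvd(2) l_def by (meson dvd_trans gcd_dvd2)
      then obtain z :: 'a where z: "z ^ l = 1" "z \<noteq> 1" using exists_root_ne1 l2 by blast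
      have "z ^ (q - 1) = 1" "z ^ r = 1" using z pow_dvd_1 l_def by auto
      then have "f z = f 1" unfolding f_def by simp
      then show False using inj z by (meson injD)
    qed
    have "inj_on g {y. y ^ (q + 1) = 1}"
    proof (rule inj_onI)
      fix y y' :: 'a assume y: "y \<in> {y. y ^ (q + 1) = 1}" "y' \<in> {y. y ^ (q + 1) = 1}" "g y = g y'"
      obtain x where x: "x \<noteq> 0" "x ^ (q - 1) = y" using pow_q1_onto y(1) by blast
      obtain x' where x': "x' \<noteq> 0" "x' ^ (q - 1) = y'" using pow_q1_onto y(2) by blast
      have fx0: "f x \<noteq> 0" using x Hne y(1) unfolding f_def by auto
      define w where "w = f x' / f x"
      have "w ^ (q - 1) = g y' / g y" unfolding w_def using fg x x' by (simp add: power_divide)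
      moreover have "g y \<noteq> 0" using fx0 fg x by (metis power_not_zero)
      ultimately have "w ^ (q - 1) = 1" using y(3) by simp
      then obtain u where u: "u ^ (q - 1) = 1" "u ^ r = w" using pow_r_onto cop by blast
      have "f (u * x) = f x'" using fmul[OF u(1)] u(2) w_def fx0 by simp
      then have "u * x = x'" using inj by (meson injD)
      then have "y' = u ^ (q - 1) * y" using x x' by (metis power_mult_distrib)
      then show "y = y'" using u by simp
    qed
    then show "coprime r (q - 1) \<and> (\<forall>y. y ^ (q + 1) = 1 \<longrightarrow> H y \<noteq> 0) \<and> inj_on g {y. y ^ (q + 1) = 1}"
      using cop Hne by blast
  next
    assume R: "coprime r (q - 1) \<and> (\<forall>y. y ^ (q + 1) = 1 \<longrightarrow> H y \<noteq> 0) \<and> inj_on g {y. y ^ (q + 1) = 1}"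
    have fne: "f x \<noteq> 0" if "x \<noteq> 0" for x
      using that R unit_pow_q1[OF that] unfolding f_def by auto
    have "inj f"
    proof (rule injI)
      fix a b assume ab: "f a = f b"
      show "a = b"
      proof (cases "a = 0 \<or> b = 0")
        case True then show ?thesis using ab f0 fne by metis
      next
        case False
        then have a0: "a \<noteq> 0" and b0: "b \<noteq> 0" by auto
        have "g (a ^ (q - 1)) = g (b ^ (q - 1))" using fg ab by metis
        then have "a ^ (q - 1) = b ^ (q - 1)" using R unit_pow_q1[OF a0] unit_pow_q1[OF b0]
          by (meson inj_onD mem_Collect_eq)
        then have z1: "(b / a) ^ (q - 1) = 1" using a0 b0 by (simp add: power_divide)
        have "f b = (b / a) ^ r * f a" using fmul[OF z1, of a] a0 by simp
        then have "(b / a) ^ r = 1" using ab fne[OF a0] by simp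
        then have "(b / a) ^ gcd r (q - 1) = 1" using z1 by (rule pow_gcd_1)
        then have "b / a = 1" using R by (simp add: coprime_iff_gcd_eq_1)
        then show ?thesis using a0 by simp
      qed
    qed
    then show "bij f" by (simp add: bij_def finite_UNIV_inj_surj)
  qed
qed

end

locale ctx = ffq q ty for q :: nat and ty :: "'a::{finite,field_gcd} itself" +
  fixes d :: nat and eps :: 'a and m :: nat
  assumes ddvd: "d dvd q + 1" and ord: "has_mult_order eps d" and m_def: "m = (q + 1) div d"
begin

abbreviation "A k \<equiv> Aset q d eps k"

lemma d_pos: "d > 0" using ord unfolding has_mult_order_def by simp

lemma md: "m * d = q + 1" using ddvd m_def by (simp add: dvd_div_mult_self)

lemma m_pos: "m > 0" using md by (cases m) auto

lemma m_dvd: "m dvd q + 1" using md by (metis dvd_triv_left)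

lemma m_dvd2: "m dvd q^2 - 1" using m_dvd q1_dvd(1) dvd_trans by blast

lemma eps_d: "eps ^ d = 1" using ord unfolding has_mult_order_def by simp

lemma eps_ne0: "eps \<noteq> 0" using eps_d d_pos by (cases d) auto

lemma eps_pow_mod: "eps ^ k = eps ^ (k mod d)"
proof -
  have "eps ^ k = eps ^ (d * (k div d) + k mod d)" by simp
  also have "\<dots> = (eps ^ d) ^ (k div d) * eps ^ (k mod d)" by (simp only: power_add power_mult)
  finally have "eps ^ k = (eps ^ d) ^ (k div d) * eps ^ (k mod d)" .
  then show ?thesis using eps_d by simp
qed

lemma eps_inj: assumes "i < d" "j < d" "eps ^ i = eps ^ j" shows "i = j"
proof (rule ccontr)
  assume "i \<noteq> j"
  then consider "i < j" | "j < i" by linarith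
  then show False
  proof cases
    case 1
    have "eps ^ j = eps ^ i * eps ^ (j - i)" using 1 by (simp add: power_add[symmetric])
    then have "eps ^ (j - i) = 1" using assms(3) eps_ne0 by simp
    then show False using ord 1 assms unfolding has_mult_order_def by auto
  next
    case 2
    have "eps ^ i = eps ^ j * eps ^ (i - j)" using 2 by (simp add: power_add[symmetric])
    then have "eps ^ (i - j) = 1" using assms(3) eps_ne0 by simp
    then show False using ord 2 assms unfolding has_mult_order_def by auto
  qed
qed

lemma mu_d: assumes "y ^ d = 1" shows "\<exists>j<d. y = eps ^ j"
proof -
  have sub: "(\<lambda>j. eps ^ j) ` {..<d} \<subseteq> {y. y ^ d = 1}"
  proof
    fix y assume "y \<in> (\<lambda>j. eps ^ j) ` {..<d}"
    then obtain j where "y = eps ^ j" by blast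
    then have "y ^ d = (eps ^ d) ^ j" by (simp only: power_mult[symmetric] mult.commute)
    then show "y \<in> {y. y ^ d = 1}" using eps_d by simp
  qed
  have "card ((\<lambda>j. eps ^ j) ` {..<d}) = d"
    by (subst card_image) (auto intro!: inj_onI eps_inj)
  moreover have "card {y::'a. y ^ d = 1} \<le> d" using card_roots_le d_pos by simp
  moreover have "card ((\<lambda>j. eps ^ j) ` {..<d}) \<le> card {y::'a. y ^ d = 1}" using sub by (intro card_mono) auto
  ultimately have "card ((\<lambda>j. eps ^ j) ` {..<d}) = card {y::'a. y ^ d = 1}" by simp
  then have "(\<lambda>j. eps ^ j) ` {..<d} = {y. y ^ d = 1}" using sub
    by (intro card_subset_eq) auto
  then show ?thesis using assms by auto
qed

lemma A_iff: "x \<in> A k \<longleftrightarrow> x \<noteq> 0 \<and> x ^ (q + 1) = 1 \<and> x ^ m = eps ^ k"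
  unfolding Aset_def mu_def m_def by auto

lemma mu_iff: "x \<in> mu n \<longleftrightarrow> x \<noteq> 0 \<and> x ^ n = 1" unfolding mu_def by auto

lemma A_mod: "A k = A (k mod d)"
proof (rule set_eqI)
  fix x show "x \<in> A k \<longleftrightarrow> x \<in> A (k mod d)" unfolding A_iff using eps_pow_mod[of k] by simp
qed

lemma A_cover: assumes "x ^ (q + 1) = 1" shows "\<exists>k<d. x \<in> A k"
proof -
  have "(x ^ m) ^ d = 1" using assms md by (simp add: power_mult[symmetric])
  then obtain j where "j < d" "x ^ m = eps ^ j" using mu_d by blast
  moreover have "x \<noteq> 0" using assms by (rule_tac ccontr) simp
  ultimately show ?thesis using assms A_iff by blast
qed

lemma A_disj: "x \<in> A i \<Longrightarrow> x \<in> A j \<Longrightarrow> i < d \<Longrightarrow> j < d \<Longrightarrow> i = j"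
proof -
  assume "x \<in> A i" "x \<in> A j" "i < d" "j < d"
  then have "eps ^ i = eps ^ j" unfolding A_iff by simp
  then show "i = j" using eps_inj \<open>i < d\<close> \<open>j < d\<close> by blast
qed

lemma A_le: "card (A k) \<le> m"
proof -
  have "A k \<subseteq> {x. x ^ m = eps ^ k}" by (auto simp: A_iff)
  then have "card (A k) \<le> card {x::'a. x ^ m = eps ^ k}" by (intro card_mono) auto
  also have "\<dots> \<le> m" using card_roots_le m_pos by simp
  finally show ?thesis .
qed

lemma mu_union: "{y::'a. y ^ (q + 1) = 1} = (\<Union>k<d. A k)"
proof
  show "{y::'a. y ^ (q + 1) = 1} \<subseteq> (\<Union>k<d. A k)" using A_cover by blast
  show "(\<Union>k<d. A k) \<subseteq> {y::'a. y ^ (q + 1) = 1}" by (auto simp: A_iff)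
qed

lemma A_card: assumes "k0 < d" shows "card (A k0) = m"
proof -
  have "q + 1 = card {y::'a. y ^ (q + 1) = 1}" using card_roots[OF q1_dvd(1)] by simp
  also have "\<dots> = (\<Sum>k<d. card (A k))" unfolding mu_union
    by (rule card_UN_disjoint) (auto dest: A_disj)
  also have "\<dots> = card (A k0) + (\<Sum>k\<in>{..<d}-{k0}. card (A k))"
    using assms by (simp add: sum.remove)
  also have "(\<Sum>k\<in>{..<d}-{k0}. card (A k)) \<le> (\<Sum>k\<in>{..<d}-{k0}. m)" by (intro sum_mono A_le)
  also have "\<dots> = (d - 1) * m" using assms by simp
  finally have "m * d \<le> card (A k0) + (d - 1) * m" using md by simp
  moreover have "m * d = m + (d - 1) * m" using d_pos by (cases d) (auto simp: algebra_simps)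
  ultimately have "m \<le> card (A k0)" by linarith
  then show ?thesis using A_le[of k0] by simp
qed

lemma A_ne: "k < d \<Longrightarrow> \<exists>x. x \<in> A k"
proof -
  assume "k < d"
  then have "card (A k) = m" by (rule A_card)
  then have "A k \<noteq> {}" using m_pos by auto
  then show ?thesis by blast
qed

lemma A_mul: assumes "x \<in> A k" "z ^ m = 1" shows "x * z \<in> A k"
proof -
  have "z ^ (q + 1) = 1" using assms(2) m_dvd pow_dvd_1 by blast
  moreover have "z \<noteq> 0" using assms(2) m_pos by (cases m) auto
  moreover have "(x * z) ^ (q + 1) = x ^ (q + 1) * z ^ (q + 1)" by (rule power_mult_distrib)
  moreover have "(x * z) ^ m = x ^ m * z ^ m" by (rule power_mult_distrib)
  ultimately show ?thesis using assms unfolding A_iff by (simp del: power_Suc)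
qed

lemma A_div: assumes "x \<in> A k" "y \<in> A k" shows "(x / y) ^ m = 1"
  using assms unfolding A_iff by (simp add: power_divide eps_ne0)

lemma pow_inj_A: assumes "k < d" shows "inj_on (\<lambda>x. x ^ E) (A k) \<longleftrightarrow> coprime E m"
proof
  assume inj: "inj_on (\<lambda>x. x ^ E) (A k)"
  show "coprime E m"
  proof (rule ccontr)
    assume nc: "\<not> coprime E m"
    define l where "l = gcd E m"
    have "l \<noteq> 1" using nc l_def by (simp add: coprime_iff_gcd_eq_1)
    moreover have "l > 0" using m_pos l_def by simp
    ultimately have l2: "l \<ge> 2" by simp
    have "l dvd q^2 - 1" using m_dvd2 l_def by (meson dvd_trans gcd_dvd2)
    then obtain z :: 'a where z: "z ^ l = 1" "z \<noteq> 1" using exists_root_ne1 l2 by blast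
    have zm: "z ^ m = 1" "z ^ E = 1" using z pow_dvd_1 l_def by auto
    obtain x where x: "x \<in> A k" using A_ne assms by blast
    have "x * z \<in> A k" using A_mul x zm by blast
    moreover have "(x * z) ^ E = x ^ E" using zm by (simp add: power_mult_distrib)
    ultimately have "x * z = x" using inj x by (meson inj_onD)
    moreover have "x \<noteq> 0" using x A_iff by blast
    ultimately show False using z by simp
  qed
next
  assume cop: "coprime E m"
  show "inj_on (\<lambda>x. x ^ E) (A k)"
  proof (rule inj_onI)
    fix x y assume xy: "x \<in> A k" "y \<in> A k" "x ^ E = y ^ E"
    have y0: "y \<noteq> 0" using xy A_iff by blast
    have "(x / y) ^ m = 1" using A_div xy by blast
    moreover have "(x / y) ^ E = 1" using xy y0 by (simp add: power_divide)
    ultimately have "(x / y) ^ gcd E m = 1" using pow_gcd_1 by blast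
    then show "x = y" using cop y0 by (simp add: coprime_iff_gcd_eq_1)
  qed
qed

lemma A_image:
  assumes "lam \<in> A p" "x \<in> A k"
  shows "lam * x ^ E \<in> A ((p + E * k) mod d)"
proof -
  have l: "lam \<noteq> 0" "lam ^ (q + 1) = 1" "lam ^ m = eps ^ p" using assms(1) unfolding A_iff by auto
  have x: "x \<noteq> 0" "x ^ (q + 1) = 1" "x ^ m = eps ^ k" using assms(2) unfolding A_iff by auto
  have e1: "(x ^ E) ^ m = (x ^ m) ^ E" by (simp only: power_mult[symmetric] mult.commute)
  have e2: "(x ^ E) ^ (q + 1) = (x ^ (q + 1)) ^ E" by (simp only: power_mult[symmetric] mult.commute)
  have e3: "(eps ^ k) ^ E = eps ^ (E * k)" by (simp only: power_mult[symmetric] mult.commute)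
  have "(lam * x ^ E) ^ m = eps ^ p * eps ^ (E * k)" using l x e1 e3 by (simp add: power_mult_distrib)
  also have "\<dots> = eps ^ ((p + E * k) mod d)" using eps_pow_mod[of "p + E * k"] by (simp add: power_add)
  finally have "(lam * x ^ E) ^ m = eps ^ ((p + E * k) mod d)" .
  moreover have "(lam * x ^ E) ^ (q + 1) = 1"
  proof -
    have "(lam * x ^ E) ^ (q + 1) = lam ^ (q + 1) * (x ^ E) ^ (q + 1)" by (rule power_mult_distrib)
    then show ?thesis using l x e2 by (simp del: power_Suc)
  qed
  ultimately show ?thesis using l x unfolding A_iff by simp
qed

lemma bij_crit:
  fixes G :: "'a \<Rightarrow> 'a" and lam :: "nat \<Rightarrow> 'a" and pp E :: "nat \<Rightarrow> nat"
  assumes H: "\<And>k. k < d \<Longrightarrow> pp k < d \<and> lam k \<in> A (pp k) \<and> (\<forall>x\<in>A k. G x = lam k * x ^ (E k))"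
  shows "inj_on G {y. y ^ (q + 1) = 1} \<longleftrightarrow>
     (\<forall>k<d. coprime (E k) m) \<and> inj_on (\<lambda>k. (pp k + E k * k) mod d) {..<d}"
proof -
  define sig where "sig = (\<lambda>k. (pp k + E k * k) mod d)"
  have img: "G x \<in> A (sig k)" if "k < d" "x \<in> A k" for k x
    using H[OF that(1)] that A_image sig_def by auto
  have sigd: "sig k < d" for k using d_pos sig_def by simp
  have lam0: "lam k \<noteq> 0" if "k < d" for k using H[OF that] A_iff by blast
  show ?thesis unfolding sig_def[symmetric]
  proof
    assume inj: "inj_on G {y. y ^ (q + 1) = 1}"
    have injA: "inj_on G (A k)" if "k < d" for k
      using inj by (rule inj_on_subset) (use that mu_union in auto)
    have cop: "coprime (E k) m" if k: "k < d" for k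
    proof -
      have "inj_on (\<lambda>x. x ^ E k) (A k)"
      proof (rule inj_onI)
        fix x y assume xy: "x \<in> A k" "y \<in> A k" "x ^ E k = y ^ E k"
        then have "G x = G y" using H[OF k] by simp
        then show "x = y" using injA[OF k] xy by (meson inj_onD)
      qed
      then show ?thesis using pow_inj_A k by blast
    qed
    have imgeq: "G ` A k = A (sig k)" if "k < d" for k
    proof (rule card_subset_eq)
      show "finite (A (sig k))" by simp
      show "G ` A k \<subseteq> A (sig k)" using img that by blast
      show "card (G ` A k) = card (A (sig k))"
        using card_image[OF injA[OF that]] A_card[OF that] A_card[OF sigd] by simp
    qed
    have "inj_on sig {..<d}"
    proof (rule inj_onI)
      fix k1 k2 assume k: "k1 \<in> {..<d}" "k2 \<in> {..<d}" "sig k1 = sig k2"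
      show "k1 = k2"
      proof (rule ccontr)
        assume ne: "k1 \<noteq> k2"
        obtain x1 where x1: "x1 \<in> A k1" using A_ne k by blast
        have "G x1 \<in> G ` A k1" using x1 by blast
        also have "\<dots> = A (sig k1)" using imgeq k by auto
        also have "\<dots> = G ` A k2" using imgeq k by auto
        finally have "G x1 \<in> G ` A k2" .
        then obtain x2 where x2: "x2 \<in> A k2" "G x1 = G x2" by blast
        have "x1 = x2" by (rule inj_onD[OF inj x2(2)]) (use x1 x2 in \<open>auto simp: A_iff\<close>)
        then show False using A_disj x1 x2 k ne by auto
      qed
    qed
    then show "(\<forall>k<d. coprime (E k) m) \<and> inj_on sig {..<d}" using cop by blast
  next
    assume R: "(\<forall>k<d. coprime (E k) m) \<and> inj_on sig {..<d}"
    show "inj_on G {y. y ^ (q + 1) = 1}"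
    proof (rule inj_onI)
      fix y1 y2 assume y: "y1 \<in> {y. y ^ (q + 1) = 1}" "y2 \<in> {y. y ^ (q + 1) = 1}" "G y1 = G y2"
      obtain k1 where k1: "k1 < d" "y1 \<in> A k1" using A_cover y by blast
      obtain k2 where k2: "k2 < d" "y2 \<in> A k2" using A_cover y by blast
      have "sig k1 = sig k2" using img[OF k1] img[OF k2] y(3) A_disj sigd by metis
      then have "k1 = k2" using R k1 k2 by (meson inj_onD lessThan_iff)
      then have "lam k1 * y1 ^ E k1 = lam k1 * y2 ^ E k1" using H k1 k2 y(3) by simp
      then have "y1 ^ E k1 = y2 ^ E k1" using lam0[OF k1(1)] by simp
      moreover have "inj_on (\<lambda>x. x ^ E k1) (A k1)" using pow_inj_A k1 R by blast
      ultimately show "y1 = y2" using k1 k2 \<open>k1 = k2\<close> by (meson inj_onD)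
    qed
  qed
qed

end

context ffq begin

lemma coeff_ptilde:
  "coeff (ptilde q f) i = (if i \<le> degree f then coeff f (degree f - i) ^ q else 0)"
proof -
  have "coeff (ptilde q f) i = (\<Sum>j\<in>{..degree f}. if degree f - j = i then coeff f j ^ q else 0)"
    unfolding ptilde_def by (simp add: coeff_sum coeff_monom)
  also have "\<dots> = (\<Sum>j\<in>{j\<in>{..degree f}. degree f - j = i}. coeff f j ^ q)"
    by (rule sum.inter_filter[symmetric]) simp
  also have "{j\<in>{..degree f}. degree f - j = i} = (if i \<le> degree f then {degree f - i} else {})"
    by auto
  finally show ?thesis by auto
qed

lemma degree_ptilde: "degree (ptilde q f) \<le> degree f"
  by (rule degree_le) (auto simp: coeff_ptilde)

lemma ptilde_eval:
  fixes x :: 'a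
  assumes x: "x \<noteq> 0" "x ^ (q + 1) = 1"
  shows "poly (ptilde q f) x = x ^ degree f * poly f x ^ q"
proof -
  define n where "n = degree f"
  have "poly (ptilde q f) x = (\<Sum>i\<le>n. coeff f i ^ q * x ^ (n - i))"
    unfolding ptilde_def n_def by (simp add: poly_sum poly_monom)
  also have "\<dots> = (\<Sum>i\<le>n. x ^ n * (coeff f i * x ^ i) ^ q)"
  proof (rule sum.cong)
    fix i assume "i \<in> {..n}"
    then have "x ^ n = x ^ (n - i) * x ^ i" by (simp add: power_add[symmetric])
    moreover have "x ^ i * (x ^ i) ^ q = 1"
    proof -
      have "x ^ i * (x ^ i) ^ q = (x ^ i) ^ (q + 1)" by simp
      also have "\<dots> = (x ^ (q + 1)) ^ i" by (simp only: power_mult[symmetric] mult.commute)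
      finally show ?thesis using x by simp
    qed
    ultimately have "x ^ n * (coeff f i * x ^ i) ^ q = coeff f i ^ q * x ^ (n - i) * (x ^ i * (x ^ i) ^ q)"
      by (simp add: power_mult_distrib algebra_simps)
    then show "coeff f i ^ q * x ^ (n - i) = x ^ n * (coeff f i * x ^ i) ^ q"
      using \<open>x ^ i * (x ^ i) ^ q = 1\<close> by simp
  qed simp
  also have "\<dots> = x ^ n * (\<Sum>i\<le>n. (coeff f i * x ^ i) ^ q)" by (simp add: sum_distrib_left)
  also have "(\<Sum>i\<le>n. (coeff f i * x ^ i) ^ q) = poly f x ^ q"
    using frob_sum[of "\<lambda>i. coeff f i * x ^ i" "{..n}"] by (simp add: poly_altdef n_def)
  finally show ?thesis unfolding n_def .
qed

lemma pow_mod_eq: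
  assumes "(x::'a) ^ n = 1" shows "x ^ a = x ^ (a mod n)"
proof -
  have "x ^ a = x ^ (n * (a div n) + a mod n)" by simp
  also have "\<dots> = (x ^ n) ^ (a div n) * x ^ (a mod n)" by (simp only: power_add power_mult)
  finally show ?thesis using assms by simp
qed

lemma power_int_mod:
  assumes "(x::'a) \<noteq> 0" "x ^ n = 1" "n > 0"
  shows "power_int x e = x ^ nat (e mod int n)"
proof -
  have False: "n \<noteq> 0" using assms(3) by simp
  have "e = int n * (e div int n) + e mod int n" by simp
  then have "power_int x e = power_int x (int n * (e div int n)) * power_int x (e mod int n)"
    by (metis assms(1) power_int_add)
  also have "power_int x (int n * (e div int n)) = power_int (power_int x (int n)) (e div int n)"
    by (simp add: power_int_mult)
  also have "power_int x (int n) = 1" using assms by simp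
  also have "power_int x (e mod int n) = x ^ nat (e mod int n)"
    using False by (metis Euclidean_Rings.pos_mod_sign nat_0_le of_nat_0_less_iff power_int_of_nat neq0_conv)
  finally show ?thesis by simp
qed

end

context ctx begin

lemma Lset_iff:
  "L \<in> Lset q d eps k t \<tau> lam \<longleftrightarrow>
   (if \<tau> = 0 then L \<noteq> 0 \<and> degree L = t \<and> ptilde q L = smult lam L \<and> gcd L (monom 1 m - [:eps ^ k:]) = 1
    else (\<exists>P Q. L = P + monom 1 (m - \<tau>) * Q \<and>
             P \<noteq> 0 \<and> degree P = t - \<tau> \<and> ptilde q P = smult lam P \<and>
             Q \<noteq> 0 \<and> degree Q = \<tau> + t - m \<and> ptilde q Q = smult (lam * eps ^ k) Q \<and>
             gcd L (monom 1 m - [:eps ^ k:]) = 1))"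
  unfolding Lset_def Let_def m_def by simp

lemma gcd_root:
  assumes "gcd L (monom 1 m - [:eps ^ k:]) = 1" "x \<in> A k"
  shows "poly L x \<noteq> 0"
proof -
  have "coprime L (monom 1 m - [:eps ^ k:])" using assms(1) by (simp add: coprime_iff_gcd_eq_1)
  from coprime_poly_0[OF this, of x]
  show ?thesis using assms(2) by (auto simp: A_iff poly_monom)
qed

lemma LsetA:
  assumes L: "L \<in> Lset q d eps k t \<tau> lam" and tau: "\<tau> = 0 \<or> (m - t \<le> \<tau> \<and> \<tau> \<le> t)"
    and tm: "t < m" and x: "x \<in> A k"
  shows "poly L x \<noteq> 0 \<and> x ^ (t - \<tau>) * poly L x ^ q = lam * poly L x"
proof -
  have x0: "x \<noteq> 0" "x ^ (q + 1) = 1" "x ^ m = eps ^ k" using x A_iff by auto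
  show ?thesis
  proof (cases "\<tau> = 0")
    case True
    then have L': "L \<noteq> 0" "degree L = t" "ptilde q L = smult lam L" "gcd L (monom 1 m - [:eps ^ k:]) = 1"
      using L Lset_iff by auto
    have "poly (ptilde q L) x = x ^ t * poly L x ^ q" using ptilde_eval[OF x0(1,2)] L'(2) by simp
    then show ?thesis using L' True gcd_root x by simp
  next
    case False
    then obtain P Q where PQ: "L = P + monom 1 (m - \<tau>) * Q"
       "P \<noteq> 0" "degree P = t - \<tau>" "ptilde q P = smult lam P"
       "Q \<noteq> 0" "degree Q = \<tau> + t - m" "ptilde q Q = smult (lam * eps ^ k) Q"
       "gcd L (monom 1 m - [:eps ^ k:]) = 1"
      using L Lset_iff by auto
    have tau': "m - t \<le> \<tau>" "\<tau> \<le> t" using tau False by auto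
    have eP: "x ^ (t - \<tau>) * poly P x ^ q = lam * poly P x"
      using ptilde_eval[OF x0(1,2), of P] PQ(3,4) by simp
    have eQ: "x ^ (\<tau> + t - m) * poly Q x ^ q = lam * eps ^ k * poly Q x"
      using ptilde_eval[OF x0(1,2), of Q] PQ(6,7) by simp
    obtain a where a: "t = \<tau> + a" using tau'(2) le_iff_add by blast
    obtain b where b: "m = \<tau> + b" using tau'(2) tm le_iff_add by (metis less_imp_le_nat order_trans)
    have ex1: "m + (t - \<tau>) + (m - \<tau>) * q = (m - \<tau>) * (q + 1) + t"
      unfolding a b by (simp add: algebra_simps)
    have ex2: "t = (m - \<tau>) + (\<tau> + t - m)" using tau' tm by simp
    have "eps ^ k * (x ^ (t - \<tau>) * (x ^ (m - \<tau>)) ^ q * poly Q x ^ q)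
        = x ^ (m + (t - \<tau>) + (m - \<tau>) * q) * poly Q x ^ q"
      using x0(3) by (simp add: power_add power_mult[symmetric] algebra_simps)
    also have "\<dots> = x ^ ((m - \<tau>) * (q + 1)) * x ^ t * poly Q x ^ q"
      unfolding ex1 by (simp only: power_add)
    also have "x ^ ((m - \<tau>) * (q + 1)) = (x ^ (q + 1)) ^ (m - \<tau>)"
      by (simp only: mult.commute[of "m - \<tau>"] power_mult)
    also have "\<dots> = 1" by (simp only: x0(2) power_one)
    also have "1 * x ^ t * poly Q x ^ q = x ^ (m - \<tau>) * (x ^ (\<tau> + t - m) * poly Q x ^ q)"
      by (subst (1) ex2) (simp only: power_add mult_1 mult.assoc)
    also have "\<dots> = eps ^ k * (lam * x ^ (m - \<tau>) * poly Q x)" using eQ by (simp add: algebra_simps)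
    finally have W: "x ^ (t - \<tau>) * (x ^ (m - \<tau>)) ^ q * poly Q x ^ q = lam * x ^ (m - \<tau>) * poly Q x"
      using eps_ne0 by simp
    have "x ^ (t - \<tau>) * poly L x ^ q = x ^ (t - \<tau>) * (poly P x + x ^ (m - \<tau>) * poly Q x) ^ q"
      using PQ(1) by (simp add: poly_monom)
    also have "\<dots> = x ^ (t - \<tau>) * poly P x ^ q + x ^ (t - \<tau>) * (x ^ (m - \<tau>)) ^ q * poly Q x ^ q"
      by (simp add: frob_add power_mult_distrib algebra_simps)
    also have "\<dots> = lam * poly L x" using eP W PQ(1) by (simp add: poly_monom algebra_simps)
    finally show ?thesis using gcd_root PQ(8) x by simp
  qed
qed

lemma lam_mu:
  assumes "x \<in> A k" "poly L x \<noteq> 0" "x ^ (t - \<tau>) * poly L x ^ q = lam * poly L x"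
  shows "lam \<noteq> 0 \<and> lam ^ (q + 1) = 1"
proof -
  define y where "y = poly L x"
  have x0: "x \<noteq> 0" "x ^ (q + 1) = 1" using assms(1) A_iff by auto
  have y0: "y \<noteq> 0" using assms(2) y_def by simp
  have lam0: "lam \<noteq> 0" using assms(3) x0 y0 y_def by auto
  have "(lam * y) ^ (q + 1) = (x ^ (t - \<tau>)) ^ (q + 1) * (y ^ q) ^ (q + 1)"
    using assms(3) y_def by (metis power_mult_distrib)
  also have "(x ^ (t - \<tau>)) ^ (q + 1) = 1"
  proof -
    have "(x ^ (t - \<tau>)) ^ (q + 1) = (x ^ (q + 1)) ^ (t - \<tau>)" by (simp only: power_mult[symmetric] mult.commute)
    then show ?thesis using x0 by simp
  qed
  also have "(y ^ q) ^ (q + 1) = y ^ (q^2 - 1) * y ^ (q + 1)"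
  proof -
    have "q * (q + 1) = (q^2 - 1) + (q + 1)" using q_ge2 by (simp add: power2_eq_square algebra_simps)
    have "(y ^ q) ^ (q + 1) = y ^ (q * (q + 1))" by (simp only: power_mult[symmetric])
    also have "\<dots> = y ^ ((q^2 - 1) + (q + 1))" by (simp only: \<open>q * (q + 1) = (q^2 - 1) + (q + 1)\<close>)
    also have "\<dots> = y ^ (q^2 - 1) * y ^ (q + 1)" by (simp only: power_add)
    finally show ?thesis .
  qed
  also have "y ^ (q^2 - 1) = 1" using unit_pow y0 by simp
  finally have "lam ^ (q + 1) * y ^ (q + 1) = y ^ (q + 1)" by (simp add: power_mult_distrib)
  then show ?thesis using y0 lam0 by simp
qed

lemma forward_formula:
  fixes r :: nat
  assumes x: "x \<in> A k" and N: "poly N x = x ^ s * poly L x"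
    and L0: "poly L x \<noteq> 0" and eL: "x ^ (t - \<tau>) * poly L x ^ q = lam * poly L x"
    and tau: "\<tau> \<le> t"
  defines "e \<equiv> int r - 2 * int s - int t + int \<tau>"
  shows "x ^ r * poly N x ^ (q - 1) = lam * x ^ nat (e mod int (q + 1))"
    and "x ^ r * poly N x ^ (q - 1) = lam * power_int x e"
proof -
  have x0: "x \<noteq> 0" "x ^ (q + 1) = 1" using x A_iff by auto
  define E where "E = nat (e mod int (q + 1))"
  define n where "n = poly N x"
  have n0: "n \<noteq> 0" using N L0 x0 n_def by simp
  have cong: "(E + 2 * s + (t - \<tau>)) mod (q + 1) = r mod (q + 1)"
  proof -
    have h0: "int (E + 2 * s + (t - \<tau>)) = e mod int (q + 1) + (2 * int s + int t - int \<tau>)"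
      using tau unfolding E_def by (simp add: of_nat_diff)
    have "int (E + 2 * s + (t - \<tau>)) mod int (q + 1) = (e mod int (q + 1) + (2 * int s + int t - int \<tau>)) mod int (q + 1)"
      unfolding h0 by (rule refl)
    also have "\<dots> = (e + (2 * int s + int t - int \<tau>)) mod int (q + 1)" by (rule mod_add_left_eq)
    finally have "int (E + 2 * s + (t - \<tau>)) mod int (q + 1) = (e + (2 * int s + int t - int \<tau>)) mod int (q + 1)" .
    also have "e + (2 * int s + int t - int \<tau>) = int r" unfolding e_def by simp
    finally have "int ((E + 2 * s + (t - \<tau>)) mod (q + 1)) = int (r mod (q + 1))"
      by (simp add: of_nat_mod)
    then show ?thesis by simp
  qed
  have xr: "x ^ (E + 2 * s + (t - \<tau>)) = x ^ r"
    using pow_mod_eq[OF x0(2), of "E + 2 * s + (t - \<tau>)"] pow_mod_eq[OF x0(2), of r] cong by simp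
  have "x ^ r * n ^ (q - 1) * (n * x ^ s * x ^ (t - \<tau>)) = x ^ r * n ^ q * x ^ s * x ^ (t - \<tau>)"
    using q_ge2 by (simp add: algebra_simps power_Suc[symmetric] del: power_Suc)
  also have "\<dots> = x ^ r * (x ^ (s * (q + 1))) * (x ^ (t - \<tau>) * poly L x ^ q)"
  proof -
    have hs: "x ^ (s * (q + 1)) = x ^ s * (x ^ s) ^ q" by (simp only: power_mult) simp
    show ?thesis unfolding n_def N hs by (simp add: power_mult_distrib algebra_simps)
  qed
  also have "x ^ (s * (q + 1)) = 1"
  proof -
    have "x ^ (s * (q + 1)) = (x ^ (q + 1)) ^ s" by (simp only: mult.commute[of s] power_mult)
    then show ?thesis by (simp only: x0(2) power_one)
  qed
  also have "x ^ r * 1 * (x ^ (t - \<tau>) * poly L x ^ q) = lam * x ^ r * poly L x" using eL by simp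
  also have "\<dots> = lam * x ^ (E + 2 * s + (t - \<tau>)) * poly L x" using xr by simp
  also have "\<dots> = lam * x ^ E * (n * x ^ s * x ^ (t - \<tau>))"
  proof -
    have h2: "x ^ (2 * s) = x ^ s * x ^ s" by (simp only: mult_2 power_add)
    show ?thesis unfolding n_def N power_add h2 by (simp add: algebra_simps)
  qed
  finally have "x ^ r * n ^ (q - 1) = lam * x ^ E" using n0 x0 by simp
  then show 1: "x ^ r * poly N x ^ (q - 1) = lam * x ^ nat (e mod int (q + 1))" using n_def E_def by simp
  show "x ^ r * poly N x ^ (q - 1) = lam * power_int x e"
    using 1 power_int_mod[OF x0] by simp
qed

end

context ctx begin

lemma g_split: assumes k: "k < d"
  shows "monom 1 m - [:eps ^ k:] = (\<Prod>a\<in>A k. [:-a, 1:])"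
proof (rule poly_eqI_degree_lead_coeff[of _ m _ "A k"])
  have dp: "degree (\<Prod>a\<in>A k. [:-a, 1:]) = m"
    using A_card[OF k] by (subst degree_prod_sum_eq) auto
  have lp: "lead_coeff (\<Prod>a\<in>A k. [:-a, 1:]) = 1" by (simp add: lead_coeff_prod)
  show "coeff (monom 1 m - [:eps ^ k:]) m = coeff (\<Prod>a\<in>A k. [:-a, 1:]) m"
    using m_pos dp lp by (simp add: coeff_pCons split: nat.split)
  show "m \<le> card (A k)" using A_card[OF k] by simp
  show "degree (monom 1 m - [:eps ^ k:]) \<le> m" by (intro degree_diff_le) (auto simp: degree_monom_eq)
  show "degree (\<Prod>a\<in>A k. [:-a, 1:]) \<le> m" using dp by simp
  show "poly (monom 1 m - [:eps ^ k:]) z = poly (\<Prod>a\<in>A k. [:-a, 1:]) z" if "z \<in> A k" for z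
  proof -
    have "poly (\<Prod>a\<in>A k. [:-a, 1:]) z = (\<Prod>a\<in>A k. z - a)" by (simp add: poly_prod)
    also have "\<dots> = 0" using that by (intro prod_zero) auto
    finally show ?thesis using that by (simp add: A_iff poly_monom)
  qed
qed

lemma gcd_nonroot:
  assumes k: "k < d" and nr: "\<forall>x\<in>A k. poly L x \<noteq> 0"
  shows "gcd L (monom 1 m - [:eps ^ k:]) = 1"
proof -
  have "coprime L (\<Prod>a\<in>A k. [:-a, 1:])"
  proof (rule prod_coprime_right)
    fix a assume a: "a \<in> A k"
    have "prime_elem [:-a, 1::'a:]" by (rule prime_elem_linear_field_poly) simp
    moreover have "\<not> [:-a, 1:] dvd L" using nr a by (simp add: dvd_iff_poly_eq_0)
    ultimately have "coprime [:-a, 1:] L" by (rule prime_elem_imp_coprime)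
    then show "coprime L [:-a, 1:]" by (simp add: coprime_commute)
  qed
  then show ?thesis using g_split[OF k] by (simp add: coprime_iff_gcd_eq_1)
qed

lemma backward:
  fixes N :: "'a poly" and c :: 'a and J r :: nat
  assumes k: "k < d"
    and Ndeg: "\<And>i. i \<ge> m \<Longrightarrow> coeff N i = 0"
    and Nne: "\<And>x. x \<in> A k \<Longrightarrow> poly N x \<noteq> 0"
    and form: "\<And>x. x \<in> A k \<Longrightarrow> x ^ r * poly N x ^ (q - 1) = c * x ^ J"
  shows "\<exists>s t \<tau> lam L. s + t < m \<and> (\<tau> = 0 \<or> (m - t \<le> \<tau> \<and> \<tau> \<le> t)) \<and>
           N = monom 1 s * L \<and> L \<in> Lset q d eps k t \<tau> lam"
proof -
  obtain x0 where x0: "x0 \<in> A k" using A_ne k by blast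
  have N0: "N \<noteq> 0" using Nne[OF x0] by auto
  have exs: "\<exists>i. coeff N i \<noteq> 0" using N0 leading_coeff_neq_0 by blast
  define s where "s = (LEAST i. coeff N i \<noteq> 0)"
  have cs: "coeff N s \<noteq> 0" unfolding s_def using exs by (rule LeastI_ex)
  have below: "coeff N i = 0" if "i < s" for i
    using that not_less_Least unfolding s_def by blast
  define L where "L = poly_shift s N"
  have NL: "N = monom 1 s * L"
    by (rule poly_eqI) (auto simp: coeff_monom_mult L_def coeff_poly_shift below)
  have L00: "coeff L 0 \<noteq> 0" using cs by (simp add: L_def coeff_poly_shift)
  then have L0: "L \<noteq> 0" by auto
  define t where "t = degree L"
  have Lt: "coeff L t \<noteq> 0" using L0 t_def by simp
  have Lbig: "coeff L i = 0" if "i > t" for i using that t_def by (simp add: coeff_eq_0)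
  have "coeff N (s + t) \<noteq> 0" using Lt NL by (simp add: coeff_monom_mult)
  then have stm: "s + t < m" using Ndeg by (meson not_le)
  have tm: "t < m" using stm by simp
  have Lx: "poly L x \<noteq> 0" if "x \<in> A k" for x using Nne[OF that] NL by (simp add: poly_monom)
  have gcdL: "gcd L (monom 1 m - [:eps ^ k:]) = 1" using gcd_nonroot k Lx by blast
  define K where "K = J + 2 * s + t + q * r"
  define j where "j = K mod m"
  define w where "w = K div m"
  define c' where "c' = c * eps ^ (k * w)"
  have jm: "j < m" using m_pos j_def by simp
  have key: "poly (ptilde q L) x = c' * x ^ j * poly L x" if x: "x \<in> A k" for x
  proof -
    have x0: "x \<noteq> 0" "x ^ (q + 1) = 1" "x ^ m = eps ^ k" using x A_iff by auto
    have pt: "poly (ptilde q L) x = x ^ t * poly L x ^ q" using ptilde_eval[OF x0(1,2)] t_def by simp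
    define l where "l = poly L x"
    have Nx: "poly N x = x ^ s * l" using NL l_def by (simp add: poly_monom)
    have "x ^ r * poly N x ^ q = (x ^ r * poly N x ^ (q - 1)) * poly N x"
      using q_ge2 by (simp add: algebra_simps power_Suc[symmetric] del: power_Suc)
    also have "\<dots> = c * x ^ J * poly N x" using form[OF x] by simp
    finally have e1: "x ^ r * (x ^ s) ^ q * l ^ q = c * x ^ J * x ^ s * l"
      unfolding Nx by (simp add: power_mult_distrib algebra_simps)
    have one1: "x ^ (r * (q + 1)) = 1"
    proof -
      have "x ^ (r * (q + 1)) = (x ^ (q + 1)) ^ r" by (simp only: mult.commute[of r] power_mult)
      then show ?thesis by (simp only: x0(2) power_one)
    qed
    have one2: "x ^ (s * (q + 1)) = 1"
    proof -
      have "x ^ (s * (q + 1)) = (x ^ (q + 1)) ^ s" by (simp only: mult.commute[of s] power_mult)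
      then show ?thesis by (simp only: x0(2) power_one)
    qed
    have "x ^ t * l ^ q = x ^ (r * (q + 1)) * x ^ (s * (q + 1)) * x ^ t * l ^ q"
      using one1 one2 by simp
    also have "\<dots> = (x ^ (q * r) * x ^ s * x ^ t) * (x ^ r * (x ^ s) ^ q * l ^ q)"
    proof -
      have a1: "x ^ (r * (q + 1)) = x ^ (q * r) * x ^ r" by (simp add: power_add[symmetric] algebra_simps)
      have a2: "x ^ (s * (q + 1)) = x ^ s * (x ^ s) ^ q" by (simp add: power_add[symmetric] power_mult[symmetric] algebra_simps)
      show ?thesis unfolding a1 a2 by (simp add: algebra_simps)
    qed
    also have "\<dots> = c * x ^ K * l"
    proof -
      have h2: "x ^ (2 * s) = x ^ s * x ^ s" by (simp only: mult_2 power_add)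
      show ?thesis unfolding e1 K_def power_add h2 by (simp add: algebra_simps)
    qed
    also have "x ^ K = x ^ j * (x ^ m) ^ w"
    proof -
      have "K = j + m * w" unfolding j_def w_def by simp
      then show ?thesis by (simp only: power_add power_mult)
    qed
    also have "(x ^ m) ^ w = eps ^ (k * w)" using x0(3) by (simp add: power_mult)
    finally show ?thesis unfolding pt l_def c'_def by (simp add: algebra_simps)
  qed
  have cardA: "card (A k) = m" using A_card[OF k] .
  have degT: "degree (ptilde q L) \<le> t" using degree_ptilde t_def by simp
  have cT: "coeff (ptilde q L) i = (if i \<le> t then coeff L (t - i) ^ q else 0)" for i
    by (simp add: coeff_ptilde t_def)
  show ?thesis
  proof (cases "j = 0")
    case True
    have "ptilde q L = smult c' L"
    proof (rule poly_eqI_degree[of "A k"])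
      show "poly (ptilde q L) x = poly (smult c' L) x" if "x \<in> A k" for x using key[OF that] True by simp
      show "degree (ptilde q L) < card (A k)" using degT tm cardA by simp
      show "degree (smult c' L) < card (A k)" using tm cardA t_def by (simp add: degree_smult_le le_less_trans)
    qed
    then have "L \<in> Lset q d eps k t 0 c'" using Lset_iff L0 t_def gcdL by simp
    then show ?thesis using stm NL by blast
  next
    case False
    then have j0: "j > 0" by simp
    define P where "P = poly_cutoff (m - j) L"
    define Q where "Q = poly_shift (m - j) L"
    define R where "R = monom 1 j * P + smult (eps ^ k) Q"
    have cP: "coeff P i = (if i < m - j then coeff L i else 0)" for i by (simp add: P_def coeff_poly_cutoff)
    have cQ: "coeff Q i = coeff L (i + (m - j))" for i by (simp add: Q_def coeff_poly_shift)
    have cR: "coeff R i = (if i < j then 0 else coeff P (i - j)) + eps ^ k * coeff Q i" for i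
      by (simp add: R_def coeff_monom_mult)
    have LPQ: "L = P + monom 1 (m - j) * Q"
      by (rule poly_eqI) (auto simp: cP cQ coeff_monom_mult)
    have evR: "x ^ j * poly L x = poly R x" if x: "x \<in> A k" for x
    proof -
      have "x ^ m = eps ^ k" using x A_iff by auto
      moreover have "x ^ j * x ^ (m - j) = x ^ m" using jm by (simp add: power_add[symmetric])
      ultimately show ?thesis unfolding R_def
        by (subst LPQ) (simp add: poly_monom algebra_simps)
    qed
    have degR: "degree R \<le> m - 1"
    proof (rule degree_le, intro allI impI)
      fix i assume "m - 1 < i"
      then have i: "i \<ge> m" by simp
      have "coeff Q i = 0" using cQ Lbig i tm by simp
      moreover have "coeff P (i - j) = 0" using cP i by simp
      ultimately show "coeff R i = 0" using cR jm i by simp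
    qed
    have TR: "ptilde q L = smult c' R"
    proof (rule poly_eqI_degree[of "A k"])
      show "poly (ptilde q L) x = poly (smult c' R) x" if "x \<in> A k" for x
        using key[OF that] evR[OF that] by (simp add: algebra_simps)
      show "degree (ptilde q L) < card (A k)" using degT tm cardA by simp
      show "degree (smult c' R) < card (A k)" using degR m_pos cardA
        by (metis degree_smult_le le_less_trans diff_less le_less_trans less_one)
    qed
    have cTR: "coeff (ptilde q L) i = c' * coeff R i" for i using TR by simp
    have pw: "a ^ q \<noteq> 0" if "a \<noteq> 0" for a :: 'a using that by simp
    have T0: "coeff (ptilde q L) 0 \<noteq> 0" using cT Lt pw by simp
    then have c'0: "c' \<noteq> 0" using cTR by auto
    have Tt: "coeff (ptilde q L) t \<noteq> 0" using cT L00 pw by simp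
    have "coeff R 0 \<noteq> 0" using T0 cTR by auto
    then have "coeff Q 0 \<noteq> 0" using cR j0 by simp
    then have "coeff L (m - j) \<noteq> 0" using cQ by simp
    then have mjt: "m - j \<le> t" using Lbig by (meson not_le)
    have jt: "j \<le> t"
    proof (rule ccontr)
      assume "\<not> j \<le> t"
      then have tj: "t < j" by simp
      have "coeff Q t = 0" using cQ Lbig jm by simp
      then have "coeff R t = 0" using cR tj by simp
      then show False using Tt cTR by simp
    qed
    have Pbig: "coeff P i = 0" if "t - j < i" for i
    proof -
      have "coeff Q (i + j) = 0" using cQ Lbig that jm jt by simp
      moreover have "coeff (ptilde q L) (i + j) = 0" using cT that jt by simp
      ultimately have "coeff P i = 0 \<or> c' = 0" using cTR[of "i + j"] cR[of "i + j"] by auto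
      then show ?thesis using c'0 by simp
    qed
    have Pt: "coeff P (t - j) \<noteq> 0"
    proof -
      have "coeff Q t = 0" using cQ Lbig jm j0 by simp
      then have "coeff R t = coeff P (t - j)" using cR jt by simp
      then show ?thesis using Tt cTR by auto
    qed
    have degP: "degree P = t - j"
      using Pbig Pt by (meson degree_le le_antisym le_degree)
    have P0: "P \<noteq> 0" using Pt by auto
    have Qb: "coeff Q (j + t - m) \<noteq> 0" using cQ Lt mjt jm by simp
    have Qbig: "coeff Q i = 0" if "j + t - m < i" for i using cQ Lbig that jm by simp
    have degQ: "degree Q = j + t - m"
      using Qb Qbig by (meson degree_le le_antisym le_degree)
    have Q0: "Q \<noteq> 0" using Qb by auto
    have ptP: "ptilde q P = smult c' P"
    proof (rule poly_eqI)
      fix i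
      show "coeff (ptilde q P) i = coeff (smult c' P) i"
      proof (cases "i \<le> t - j")
        case True
        have "coeff (ptilde q P) i = coeff P (t - j - i) ^ q" using True by (simp add: coeff_ptilde degP)
        also have "coeff P (t - j - i) = coeff L (t - (i + j))"
        proof -
          have e: "t - j - i = t - (i + j)" by simp
          have "t - (i + j) < m - j" using True tm jt by arith
          then show ?thesis using cP e by simp
        qed
        also have "coeff L (t - (i + j)) ^ q = coeff (ptilde q L) (i + j)" using cT True jt by simp
        also have "\<dots> = c' * coeff R (i + j)" by (rule cTR)
        also have "coeff R (i + j) = coeff P i" using cR cQ Lbig tm jt True by simp
        finally show ?thesis by simp
      next
        case False
        then show ?thesis using Pbig by (simp add: coeff_ptilde degP)
      qed
    qed
    have ptQ: "ptilde q Q = smult (c' * eps ^ k) Q"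
    proof (rule poly_eqI)
      fix i
      show "coeff (ptilde q Q) i = coeff (smult (c' * eps ^ k) Q) i"
      proof (cases "i \<le> j + t - m")
        case True
        have "coeff (ptilde q Q) i = coeff Q (j + t - m - i) ^ q" using True by (simp add: coeff_ptilde degQ)
        also have "coeff Q (j + t - m - i) = coeff L (t - i)" using cQ True mjt jm by simp
        also have "coeff L (t - i) ^ q = coeff (ptilde q L) i" using cT True jm by simp
        also have "\<dots> = c' * coeff R i" by (rule cTR)
        also have "coeff R i = eps ^ k * coeff Q i"
        proof -
          have "i < j" using True tm j0 by arith
          then show ?thesis using cR by simp
        qed
        finally show ?thesis by simp
      next
        case False
        then show ?thesis using Qbig by (simp add: coeff_ptilde degQ)
      qed
    qed
    have "L \<in> Lset q d eps k t j c'"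
      using Lset_iff[of L k t j c'] False LPQ P0 degP ptP Q0 degQ ptQ gcdL by (auto simp: add.commute)
    moreover have "m - t \<le> j \<and> j \<le> t" using mjt jt jm by simp
    ultimately show ?thesis using stm NL by blast
  qed
qed

end

context ctx begin

lemma h_eval:
  fixes a :: "nat \<Rightarrow> nat \<Rightarrow> 'a"
  assumes x: "x \<in> A k"
  shows "poly (\<Sum>i<m. \<Sum>j<d. monom (a i j) (i + j * m)) x =
         poly (\<Sum>i<m. monom (\<Sum>j<d. a i j * eps ^ (j * k)) i) x"
proof -
  have xm: "x ^ m = eps ^ k" using x A_iff by auto
  have "poly (\<Sum>i<m. \<Sum>j<d. monom (a i j) (i + j * m)) x = (\<Sum>i<m. \<Sum>j<d. a i j * x ^ (i + j * m))"
    by (simp add: poly_sum poly_monom)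
  also have "\<dots> = (\<Sum>i<m. \<Sum>j<d. a i j * eps ^ (j * k) * x ^ i)"
  proof (intro sum.cong refl)
    fix i j
    have "x ^ (i + j * m) = x ^ i * (x ^ m) ^ j" by (simp only: power_add mult.commute[of j] power_mult)
    also have "(x ^ m) ^ j = eps ^ (j * k)" using xm by (simp only: power_mult[symmetric] mult.commute)
    finally show "a i j * x ^ (i + j * m) = a i j * eps ^ (j * k) * x ^ i" by (simp add: algebra_simps)
  qed
  also have "\<dots> = poly (\<Sum>i<m. monom (\<Sum>j<d. a i j * eps ^ (j * k)) i) x"
    by (simp add: poly_sum poly_monom sum_distrib_right)
  finally show ?thesis .
qed

lemma N_coeff: "i \<ge> m \<Longrightarrow> coeff (\<Sum>i'<m. monom (f i') i') i = 0"
  by (simp add: coeff_sum coeff_monom)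

lemma coprime_e: "coprime (nat (e mod int (q + 1))) m \<longleftrightarrow> gcd e (int m) = 1"
proof -
  have nn: "int (nat (e mod int (q + 1))) = e mod int (q + 1)" by simp
  have dv: "int m dvd int (q + 1)" by (subst int_dvd_int_iff) (rule m_dvd)
  have m0: "int m \<noteq> 0" using m_pos by simp
  have "coprime (nat (e mod int (q + 1))) m \<longleftrightarrow> coprime (e mod int (q + 1)) (int m)"
    by (subst coprime_int_iff[symmetric]) (simp only: nn)
  also have "\<dots> \<longleftrightarrow> coprime (e mod int (q + 1) mod int m) (int m)"
    using coprime_mod_left_iff[OF m0] by simp
  also have "e mod int (q + 1) mod int m = e mod int m" by (rule mod_mod_cancel[OF dv])
  also have "coprime (e mod int m) (int m) \<longleftrightarrow> coprime e (int m)" using coprime_mod_left_iff[OF m0] by simp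
  finally show ?thesis by (simp add: coprime_iff_gcd_eq_1)
qed

lemma sig_e: "int ((p + nat (e mod int (q + 1)) * k) mod d) = (int p + e * int k) mod int d"
proof -
  have dv: "int d dvd int (q + 1)" by (subst int_dvd_int_iff) (rule ddvd)
  have nn: "int (nat (e mod int (q + 1))) = e mod int (q + 1)" by simp
  have "int ((p + nat (e mod int (q + 1)) * k) mod d) = (int p + (e mod int (q + 1)) * int k) mod int d"
    by (simp add: of_nat_mod nn)
  also have "\<dots> = (int p + (e mod int (q + 1)) * int k mod int d) mod int d" by (simp add: mod_add_right_eq)
  also have "(e mod int (q + 1)) * int k mod int d = (e mod int (q + 1) mod int d) * int k mod int d"
    by (simp add: mod_mult_left_eq)
  also have "e mod int (q + 1) mod int d = e mod int d" by (rule mod_mod_cancel[OF dv])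
  also have "(e mod int d) * int k mod int d = e * int k mod int d" by (simp add: mod_mult_left_eq)
  also have "(int p + e * int k mod int d) mod int d = (int p + e * int k) mod int d" by (simp add: mod_add_right_eq)
  finally show ?thesis .
qed

lemma bij_int:
  assumes "\<And>k. k < d \<Longrightarrow> psi k < d"
  shows "bij_betw (\<lambda>k. int (psi k)) {..<d} {0..<int d} \<longleftrightarrow> inj_on psi {..<d}"
proof
  assume "bij_betw (\<lambda>k. int (psi k)) {..<d} {0..<int d}"
  then have "inj_on (int \<circ> psi) {..<d}" by (simp add: bij_betw_def comp_def)
  then show "inj_on psi {..<d}" by (rule inj_on_imageI2)
next
  assume inj: "inj_on psi {..<d}"
  have inj2: "inj_on (\<lambda>k. int (psi k)) {..<d}" using inj by (simp add: inj_on_def)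
  have sub: "(\<lambda>k. int (psi k)) ` {..<d} \<subseteq> {0..<int d}" using assms by auto
  have "card ((\<lambda>k. int (psi k)) ` {..<d}) = card {0..<int d}"
    using card_image[OF inj2] by simp
  then have "(\<lambda>k. int (psi k)) ` {..<d} = {0..<int d}" using sub by (intro card_subset_eq) auto
  then show "bij_betw (\<lambda>k. int (psi k)) {..<d} {0..<int d}" using inj2 by (simp add: bij_betw_def)
qed

end

theorem theorem2p3:
  fixes q d r :: nat and eps :: "'a::{finite,field_gcd}" and a :: "nat \<Rightarrow> nat \<Rightarrow> 'a"
  assumes "is_prime_power q" and "CARD('a) = q ^ 2"
    and "d dvd q + 1" and "has_mult_order eps d" and "r > 0"
  defines "m \<equiv> (q + 1) div d"
  defines "h \<equiv> (\<Sum>i<m. \<Sum>j<d. monom (a i j) (i + j * m))"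
  defines "M \<equiv> (\<lambda>i k. \<Sum>j<d. a i j * eps ^ (j * k))"
  shows
   "(permutation_poly (monom 1 r * pcompose h (monom 1 (q - 1))) \<and>
     (\<forall>k<d. \<exists>c::'a. \<exists>n::int. \<forall>x\<in>Aset q d eps k.
          x ^ r * (poly h x) ^ (q - 1) = c * power_int x n))
    \<longleftrightarrow>
    (\<exists>(s::nat\<Rightarrow>nat) (t::nat\<Rightarrow>nat) (pp::nat\<Rightarrow>nat) (lam::nat\<Rightarrow>'a) (\<tau>::nat\<Rightarrow>nat) (L::nat\<Rightarrow>'a poly).
       (\<forall>k<d. s k + t k < m \<and> pp k < d \<and> lam k \<in> Aset q d eps (pp k) \<and>
              (\<tau> k = 0 \<or> (m - t k \<le> \<tau> k \<and> \<tau> k \<le> t k)) \<and>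
              (\<Sum>i<m. monom (M i k) i) = monom 1 (s k) * L k \<and>
              L k \<in> Lset q d eps k (t k) (\<tau> k) (lam k)) \<and>
       gcd r (q - 1) = 1 \<and>
       (\<forall>k<d. gcd (int r - 2 * int (s k) - int (t k) + int (\<tau> k)) (int m) = 1) \<and>
       bij_betw (\<lambda>k. (int (pp k) + (int r - 2 * int (s k) - int (t k) + int (\<tau> k)) * int k) mod int d)
         {..<d} {0..<int d})"
proof -
  interpret C: ctx q "TYPE('a)" d eps m
    by unfold_locales (use assms in \<open>simp_all add: m_def\<close>)
  define N where "N = (\<lambda>k. \<Sum>i<m. monom (M i k) i)"
  define g where "g = (\<lambda>y::'a. y ^ r * poly h y ^ (q - 1))"
  define U where "U = {y::'a. y ^ (q + 1) = 1}"
  have hN: "poly h x = poly (N k) x" if "x \<in> Aset q d eps k" for k x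
    unfolding h_def N_def M_def using that by (rule C.h_eval)
  have Ndeg: "coeff (N k) i = 0" if "i \<ge> m" for k i
    unfolding N_def using that by (rule C.N_coeff)
  have polyF: "poly (monom 1 r * pcompose h (monom 1 (q - 1))) = (\<lambda>x. x ^ r * poly h (x ^ (q - 1)))"
    by (rule ext) (simp add: poly_pcompose poly_monom)
  have zv: "permutation_poly (monom 1 r * pcompose h (monom 1 (q - 1))) \<longleftrightarrow>
     (coprime r (q - 1) \<and> (\<forall>y. y ^ (q + 1) = 1 \<longrightarrow> poly h y \<noteq> 0) \<and> inj_on g U)"
    unfolding permutation_poly_def polyF g_def U_def by (rule C.zieve) (rule assms(5))
  have q1: "q + 1 > 0" by simp
  show ?thesis
  proof
    assume LHS: "permutation_poly (monom 1 r * pcompose h (monom 1 (q - 1))) \<and>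
     (\<forall>k<d. \<exists>c::'a. \<exists>n::int. \<forall>x\<in>Aset q d eps k.
          x ^ r * (poly h x) ^ (q - 1) = c * power_int x n)"
    then have cop: "coprime r (q - 1)" and Hne: "\<And>y. y ^ (q + 1) = 1 \<Longrightarrow> poly h y \<noteq> 0"
      and injg: "inj_on g U" using zv by auto
    define P where "P = (\<lambda>k (z :: nat \<times> nat \<times> nat \<times> 'a \<times> 'a poly \<times> nat).
       case z of (s, t, \<tau>, lam, L, pp) \<Rightarrow>
         s + t < m \<and> pp < d \<and> lam \<in> Aset q d eps pp \<and> (\<tau> = 0 \<or> (m - t \<le> \<tau> \<and> \<tau> \<le> t)) \<and>
         N k = monom 1 s * L \<and> L \<in> Lset q d eps k t \<tau> lam)"
    have ex: "\<forall>k\<in>{..<d}. \<exists>z. P k z"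
    proof
      fix k assume "k \<in> {..<d}"
      then have k: "k < d" by simp
      obtain c n where cn: "\<forall>x\<in>Aset q d eps k. x ^ r * (poly h x) ^ (q - 1) = c * power_int x n"
        using LHS k by blast
      have form: "x ^ r * poly (N k) x ^ (q - 1) = c * x ^ nat (n mod int (q + 1))"
        if x: "x \<in> Aset q d eps k" for x
      proof -
        have x0: "x \<noteq> 0" "x ^ (q + 1) = 1" using x C.A_iff by auto
        have "x ^ r * (poly h x) ^ (q - 1) = c * power_int x n" using cn x by blast
        then show ?thesis using hN[OF x] C.power_int_mod[OF x0 q1, of n] by simp
      qed
      have Nne: "poly (N k) x \<noteq> 0" if x: "x \<in> Aset q d eps k" for x
        using Hne[of x] x hN[OF x] C.A_iff by auto
      obtain s t \<tau> lam L where B: "s + t < m" "\<tau> = 0 \<or> (m - t \<le> \<tau> \<and> \<tau> \<le> t)"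
           "N k = monom 1 s * L" "L \<in> Lset q d eps k t \<tau> lam"
        using C.backward[OF k, of "N k" r c "nat (n mod int (q + 1))"] Ndeg Nne form by blast
      obtain x0 where x0: "x0 \<in> Aset q d eps k" using C.A_ne k by blast
      have LA: "poly L x0 \<noteq> 0 \<and> x0 ^ (t - \<tau>) * poly L x0 ^ q = lam * poly L x0"
        using C.LsetA[OF B(4) B(2) _ x0] B(1) by simp
      then have "lam \<noteq> 0 \<and> lam ^ (q + 1) = 1" using C.lam_mu x0 by blast
      then obtain pp where "pp < d" "lam \<in> Aset q d eps pp" using C.A_cover by blast
      then have "P k (s, t, \<tau>, lam, L, pp)" unfolding P_def using B by simp
      then show "\<exists>z. P k z" by blast
    qed
    then obtain F where F: "\<forall>k\<in>{..<d}. P k (F k)" by (metis bchoice)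
    define s where "s = (\<lambda>k. fst (F k))"
    define t where "t = (\<lambda>k. fst (snd (F k)))"
    define \<tau> where "\<tau> = (\<lambda>k. fst (snd (snd (F k))))"
    define lam where "lam = (\<lambda>k. fst (snd (snd (snd (F k)))))"
    define L where "L = (\<lambda>k. fst (snd (snd (snd (snd (F k))))))"
    define pp where "pp = (\<lambda>k. snd (snd (snd (snd (snd (F k))))))"
    have Pk: "s k + t k < m \<and> pp k < d \<and> lam k \<in> Aset q d eps (pp k) \<and>
         (\<tau> k = 0 \<or> (m - t k \<le> \<tau> k \<and> \<tau> k \<le> t k)) \<and>
         N k = monom 1 (s k) * L k \<and> L k \<in> Lset q d eps k (t k) (\<tau> k) (lam k)" if "k < d" for k
    proof -
      have "P k (F k)" using F that by simp
      then show ?thesis unfolding P_def s_def t_def \<tau>_def lam_def L_def pp_def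
        by (cases "F k") auto
    qed
    define e where "e = (\<lambda>k. int r - 2 * int (s k) - int (t k) + int (\<tau> k))"
    define E where "E = (\<lambda>k. nat (e k mod int (q + 1)))"
    have gform: "\<forall>x\<in>Aset q d eps k. g x = lam k * x ^ E k" if k: "k < d" for k
    proof
      fix x assume x: "x \<in> Aset q d eps k"
      have LA: "poly (L k) x \<noteq> 0 \<and> x ^ (t k - \<tau> k) * poly (L k) x ^ q = lam k * poly (L k) x"
        using C.LsetA[of "L k" k "t k" "\<tau> k" "lam k" x] Pk[OF k] x by auto
      have Nx: "poly (N k) x = x ^ s k * poly (L k) x" using Pk[OF k] by (simp add: poly_monom)
      have tt: "\<tau> k \<le> t k" using Pk[OF k] by auto
      show "g x = lam k * x ^ E k"
        using C.forward_formula(1)[where r=r, OF x Nx _ _ tt] LA hN[OF x]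
        unfolding g_def E_def e_def by simp
    qed
    have bc: "inj_on g {y. y ^ (q + 1) = 1} \<longleftrightarrow>
       (\<forall>k<d. coprime (E k) m) \<and> inj_on (\<lambda>k. (pp k + E k * k) mod d) {..<d}"
      by (rule C.bij_crit) (use Pk gform in auto)
    then have R1: "\<forall>k<d. coprime (E k) m" and R2: "inj_on (\<lambda>k. (pp k + E k * k) mod d) {..<d}"
      using injg U_def by auto
    have "bij_betw (\<lambda>k. int ((pp k + E k * k) mod d)) {..<d} {0..<int d}"
      using R2 C.bij_int[of "\<lambda>k. (pp k + E k * k) mod d"] C.d_pos by simp
    moreover have "\<And>k. int ((pp k + E k * k) mod d) = (int (pp k) + e k * int k) mod int d"
      unfolding E_def by (rule C.sig_e)
    ultimately have bj: "bij_betw (\<lambda>k. (int (pp k) + e k * int k) mod int d) {..<d} {0..<int d}"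
      by simp
    have gc: "\<forall>k<d. gcd (e k) (int m) = 1" using R1 C.coprime_e unfolding E_def by blast
    have grq: "gcd r (q - 1) = 1" using cop by (simp add: coprime_iff_gcd_eq_1)
    have X1: "\<forall>k<d. s k + t k < m \<and> pp k < d \<and> lam k \<in> Aset q d eps (pp k) \<and>
              (\<tau> k = 0 \<or> (m - t k \<le> \<tau> k \<and> \<tau> k \<le> t k)) \<and>
              (\<Sum>i<m. monom (M i k) i) = monom 1 (s k) * L k \<and>
              L k \<in> Lset q d eps k (t k) (\<tau> k) (lam k)"
    proof (intro allI impI)
      fix k assume k: "k < d"
      show "s k + t k < m \<and> pp k < d \<and> lam k \<in> Aset q d eps (pp k) \<and>
              (\<tau> k = 0 \<or> (m - t k \<le> \<tau> k \<and> \<tau> k \<le> t k)) \<and>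
              (\<Sum>i<m. monom (M i k) i) = monom 1 (s k) * L k \<and>
              L k \<in> Lset q d eps k (t k) (\<tau> k) (lam k)"
        using Pk[OF k] unfolding N_def by (elim conjE) (intro conjI; assumption)
    qed
    have X3: "\<forall>k<d. gcd (int r - 2 * int (s k) - int (t k) + int (\<tau> k)) (int m) = 1"
      using gc by (simp only: e_def)
    have X4: "bij_betw (\<lambda>k. (int (pp k) + (int r - 2 * int (s k) - int (t k) + int (\<tau> k)) * int k) mod int d)
         {..<d} {0..<int d}" using bj by (simp only: e_def)
    note X = conjI[OF X1 conjI[OF grq conjI[OF X3 X4]]]
    show "\<exists>(s::nat\<Rightarrow>nat) (t::nat\<Rightarrow>nat) (pp::nat\<Rightarrow>nat) (lam::nat\<Rightarrow>'a) (\<tau>::nat\<Rightarrow>nat) (L::nat\<Rightarrow>'a poly).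
       (\<forall>k<d. s k + t k < m \<and> pp k < d \<and> lam k \<in> Aset q d eps (pp k) \<and>
              (\<tau> k = 0 \<or> (m - t k \<le> \<tau> k \<and> \<tau> k \<le> t k)) \<and>
              (\<Sum>i<m. monom (M i k) i) = monom 1 (s k) * L k \<and>
              L k \<in> Lset q d eps k (t k) (\<tau> k) (lam k)) \<and>
       gcd r (q - 1) = 1 \<and>
       (\<forall>k<d. gcd (int r - 2 * int (s k) - int (t k) + int (\<tau> k)) (int m) = 1) \<and>
       bij_betw (\<lambda>k. (int (pp k) + (int r - 2 * int (s k) - int (t k) + int (\<tau> k)) * int k) mod int d)
         {..<d} {0..<int d}"
      by (rule exI[of _ s], rule exI[of _ t], rule exI[of _ pp], rule exI[of _ lam],
          rule exI[of _ \<tau>], rule exI[of _ L], rule X)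
  next
    assume "\<exists>(s::nat\<Rightarrow>nat) (t::nat\<Rightarrow>nat) (pp::nat\<Rightarrow>nat) (lam::nat\<Rightarrow>'a) (\<tau>::nat\<Rightarrow>nat) (L::nat\<Rightarrow>'a poly).
       (\<forall>k<d. s k + t k < m \<and> pp k < d \<and> lam k \<in> Aset q d eps (pp k) \<and>
              (\<tau> k = 0 \<or> (m - t k \<le> \<tau> k \<and> \<tau> k \<le> t k)) \<and>
              (\<Sum>i<m. monom (M i k) i) = monom 1 (s k) * L k \<and>
              L k \<in> Lset q d eps k (t k) (\<tau> k) (lam k)) \<and>
       gcd r (q - 1) = 1 \<and>
       (\<forall>k<d. gcd (int r - 2 * int (s k) - int (t k) + int (\<tau> k)) (int m) = 1) \<and>
       bij_betw (\<lambda>k. (int (pp k) + (int r - 2 * int (s k) - int (t k) + int (\<tau> k)) * int k) mod int d)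
         {..<d} {0..<int d}"
    then obtain s t pp lam \<tau> L where
      H1: "\<forall>k<d. s k + t k < m \<and> pp k < d \<and> lam k \<in> Aset q d eps (pp k) \<and>
              (\<tau> k = 0 \<or> (m - t k \<le> \<tau> k \<and> \<tau> k \<le> t k)) \<and>
              (\<Sum>i<m. monom (M i k) i) = monom 1 (s k) * L k \<and>
              L k \<in> Lset q d eps k (t k) (\<tau> k) (lam k)" and
      gr: "gcd r (q - 1) = 1" and
      ge: "\<forall>k<d. gcd (int r - 2 * int (s k) - int (t k) + int (\<tau> k)) (int m) = 1" and
      bj: "bij_betw (\<lambda>k. (int (pp k) + (int r - 2 * int (s k) - int (t k) + int (\<tau> k)) * int k) mod int d)
         {..<d} {0..<int d}"
      by (elim exE conjE)
    have Pk: "s k + t k < m \<and> pp k < d \<and> lam k \<in> Aset q d eps (pp k) \<and>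
              (\<tau> k = 0 \<or> (m - t k \<le> \<tau> k \<and> \<tau> k \<le> t k)) \<and>
              N k = monom 1 (s k) * L k \<and>
              L k \<in> Lset q d eps k (t k) (\<tau> k) (lam k)" if k: "k < d" for k
      using H1 k unfolding N_def by blast
    define e where "e = (\<lambda>k. int r - 2 * int (s k) - int (t k) + int (\<tau> k))"
    define E where "E = (\<lambda>k. nat (e k mod int (q + 1)))"
    have loc: "poly h x = x ^ s k * poly (L k) x \<and> poly (L k) x \<noteq> 0 \<and>
               g x = lam k * x ^ E k \<and> g x = lam k * power_int x (e k)"
      if k: "k < d" and x: "x \<in> Aset q d eps k" for k x
    proof -
      have LA: "poly (L k) x \<noteq> 0 \<and> x ^ (t k - \<tau> k) * poly (L k) x ^ q = lam k * poly (L k) x"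
        using C.LsetA[of "L k" k "t k" "\<tau> k" "lam k" x] Pk[OF k] x by auto
      have Nx: "poly (N k) x = x ^ s k * poly (L k) x" using Pk[OF k] by (simp add: poly_monom)
      have tt: "\<tau> k \<le> t k" using Pk[OF k] by auto
      show ?thesis
        using C.forward_formula[where r=r, OF x Nx _ _ tt] LA hN[OF x] Nx
        unfolding g_def E_def e_def by simp
    qed
    have gform: "\<forall>x\<in>Aset q d eps k. g x = lam k * x ^ E k" if k: "k < d" for k
      using loc k by blast
    have bc: "inj_on g {y. y ^ (q + 1) = 1} \<longleftrightarrow>
       (\<forall>k<d. coprime (E k) m) \<and> inj_on (\<lambda>k. (pp k + E k * k) mod d) {..<d}"
      by (rule C.bij_crit) (use Pk gform in auto)
    have R1: "\<forall>k<d. coprime (E k) m" using ge C.coprime_e unfolding E_def e_def by blast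
    have "\<And>k. int ((pp k + E k * k) mod d) = (int (pp k) + e k * int k) mod int d"
      unfolding E_def by (rule C.sig_e)
    then have "bij_betw (\<lambda>k. int ((pp k + E k * k) mod d)) {..<d} {0..<int d}"
      using bj unfolding e_def by simp
    then have R2: "inj_on (\<lambda>k. (pp k + E k * k) mod d) {..<d}"
      using C.bij_int[of "\<lambda>k. (pp k + E k * k) mod d"] C.d_pos by simp
    have injg: "inj_on g U" using bc R1 R2 U_def by simp
    have Hne: "\<forall>y. y ^ (q + 1) = 1 \<longrightarrow> poly h y \<noteq> 0"
    proof (intro allI impI)
      fix y :: 'a assume "y ^ (q + 1) = 1"
      then obtain k where k: "k < d" "y \<in> Aset q d eps k" using C.A_cover by blast
      have "y \<noteq> 0" using k C.A_iff by auto
      then show "poly h y \<noteq> 0" using loc[OF k] by simp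
    qed
    have cop: "coprime r (q - 1)" using gr by (simp add: coprime_iff_gcd_eq_1)
    have perm: "permutation_poly (monom 1 r * pcompose h (monom 1 (q - 1)))"
      using zv cop Hne injg by blast
    have "\<forall>k<d. \<exists>c::'a. \<exists>n::int. \<forall>x\<in>Aset q d eps k. x ^ r * (poly h x) ^ (q - 1) = c * power_int x n"
    proof (intro allI impI)
      fix k assume k: "k < d"
      have "\<forall>x\<in>Aset q d eps k. x ^ r * (poly h x) ^ (q - 1) = lam k * power_int x (e k)"
        using loc[OF k] unfolding g_def by blast
      then show "\<exists>c::'a. \<exists>n::int. \<forall>x\<in>Aset q d eps k. x ^ r * (poly h x) ^ (q - 1) = c * power_int x n"
        by blast
    qed
    then show "permutation_poly (monom 1 r * pcompose h (monom 1 (q - 1))) \<and>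
     (\<forall>k<d. \<exists>c::'a. \<exists>n::int. \<forall>x\<in>Aset q d eps k.
          x ^ r * (poly h x) ^ (q - 1) = c * power_int x n)" using perm by blast
  qed
qed


end
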